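(* Let $k\ge2$, let $I$ be a purified instance relative to $C_k$, and let $I=I_1\cup\dots\cup I_m$, where $I_j$ consists of the tuples of $I$ whose corresponding edges lie in the $j$-th strongly connected component of $F_{C_k}(I)$. Then the frugal repairs of $I$ for $C_k$ are exactly the sets $r_1\cup\dots\cup r_m$ where, for each $j$, $r_j$ is a frugal repair of $I_j$ for $C_k$ (chosen independently).
   Context: $C_k=R_1(\underline{x_1},x_2),\dots,R_k(\underline{x_k},x_1)$, $k\ge2$, first attribute the key, relations of consistent or inconsistent type. A repair is a maximal subset satisfying all key constraints; $C_k^f(r)$ is the set of satisfying valuations $(a_1,\dots,a_k)$; a repair $r$ of $I$ is frugal if no repair $r'$ of $I$ has $C_k^f(r')\subsetneq C_k^f(r)$. $I$ is purified relative to $C_k$ if every tuple occurs in some tuple of $C_k^f(I)$. The instance graph $F_{C_k}(I)$ has the constants as vertices and an edge $(a,b)$ per tuple $R_i(a,b)$; constants in positions of distinct variables are distinct. For purified $I$, every edge of $F_{C_k}(I)$ has both endpoints in one strongly connected component. *)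

theory Defs
  imports Main
begin

text \<open>Query C_k = R_0(x_0,x_1), R_1(x_1,x_2), ..., R_(k-1)(x_(k-1),x_0)
  (0-indexed version of R_1(x_1,x_2),...,R_k(x_k,x_1)).
  A fact R_i(a,b) is encoded as the triple (i, a, b); the first attribute a is the key.\<close>

type_synonym 'c fact = "nat \<times> 'c \<times> 'c"

definition wf_instance :: "nat \<Rightarrow> 'c fact set \<Rightarrow> bool" where
  "wf_instance k I \<longleftrightarrow> finite I \<and> (\<forall>(i, a, b) \<in> I. i < k)"

definition key_consistent :: "'c fact set \<Rightarrow> bool" where
  "key_consistent r \<longleftrightarrow> (\<forall>i a b b'. (i, a, b) \<in> r \<longrightarrow> (i, a, b') \<in> r \<longrightarrow> b = b')"

definition is_repair :: "'c fact set \<Rightarrow> 'c fact set \<Rightarrow> bool" where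
  "is_repair I r \<longleftrightarrow> r \<subseteq> I \<and> key_consistent r \<and>
     (\<forall>r'. r \<subset> r' \<longrightarrow> r' \<subseteq> I \<longrightarrow> \<not> key_consistent r')"

text \<open>C_k^f(r): satisfying valuations (a_0,...,a_(k-1)), given as lists of length k.\<close>
definition sat :: "nat \<Rightarrow> 'c fact set \<Rightarrow> 'c list set" where
  "sat k r = {as. length as = k \<and> (\<forall>i<k. (i, as ! i, as ! ((i + 1) mod k)) \<in> r)}"

definition frugal_repair :: "nat \<Rightarrow> 'c fact set \<Rightarrow> 'c fact set \<Rightarrow> bool" where
  "frugal_repair k I r \<longleftrightarrow> is_repair I r \<and> \<not> (\<exists>r'. is_repair I r' \<and> sat k r' \<subset> sat k r)"

definition purified :: "nat \<Rightarrow> 'c fact set \<Rightarrow> bool" where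
  "purified k I \<longleftrightarrow> (\<forall>f \<in> I. \<exists>as \<in> sat k I. \<exists>i<k. f = (i, as ! i, as ! ((i + 1) mod k)))"

text \<open>CTtants in positions of distinct variables are distinct. In R_i(a,b),
  a sits at a position of variable x_i and b at a position of x_((i+1) mod k).\<close>
definition distinct_var_constants :: "nat \<Rightarrow> 'c fact set \<Rightarrow> bool" where
  "distinct_var_constants k I \<longleftrightarrow>
     (\<forall>(i, a, b) \<in> I. \<forall>(j, c, d) \<in> I.
        (a = c \<longrightarrow> i = j) \<and> (b = d \<longrightarrow> (i + 1) mod k = (j + 1) mod k) \<and>
        (a = d \<longrightarrow> i = (j + 1) mod k) \<and> (b = c \<longrightarrow> (i + 1) mod k = j))"

definition consistent_on :: "nat set \<Rightarrow> 'c fact set \<Rightarrow> bool" where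
  "consistent_on CT I \<longleftrightarrow> (\<forall>i \<in> CT. key_consistent {f \<in> I. fst f = i})"

definition inst_edges :: "'c fact set \<Rightarrow> ('c \<times> 'c) set" where
  "inst_edges I = {(a, b). \<exists>i. (i, a, b) \<in> I}"

definition inst_sccs :: "'c fact set \<Rightarrow> 'c set set" where
  "inst_sccs I = {C. \<exists>v \<in> Field (inst_edges I).
       C = {w. (v, w) \<in> (inst_edges I)\<^sup>* \<and> (w, v) \<in> (inst_edges I)\<^sup>*}}"

definition comp_part :: "'c fact set \<Rightarrow> 'c set \<Rightarrow> 'c fact set" where
  "comp_part I C = {(i, a, b) \<in> I. a \<in> C \<and> b \<in> C}"

end

theory Submission
  imports Defs
begin

definition scc :: "('c \<times> 'c) set \<Rightarrow> 'c \<Rightarrow> 'c set" where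
  "scc E v = {w. (v, w) \<in> E\<^sup>* \<and> (w, v) \<in> E\<^sup>*}"

lemma repair_char:
  "is_repair I r \<longleftrightarrow> r \<subseteq> I \<and> key_consistent r \<and>
     (\<forall>i a b. (i,a,b) \<in> I \<longrightarrow> (\<exists>b'. (i,a,b') \<in> r))"
proof
  assume R: "is_repair I r"
  have "\<exists>b'. (i,a,b') \<in> r" if "(i,a,b) \<in> I" for i a b
  proof (rule ccontr)
    assume n: "\<not> ?thesis"
    have "r \<subset> insert (i,a,b) r" using n by blast
    moreover have "insert (i,a,b) r \<subseteq> I" using R that unfolding is_repair_def by blast
    moreover have "key_consistent (insert (i,a,b) r)"
      using R n unfolding is_repair_def key_consistent_def by blast
    ultimately show False using R unfolding is_repair_def by blast
  qed
  then show "r \<subseteq> I \<and> key_consistent r \<and> (\<forall>i a b. (i,a,b) \<in> I \<longrightarrow> (\<exists>b'. (i,a,b') \<in> r))"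
    using R unfolding is_repair_def by blast
next
  assume R: "r \<subseteq> I \<and> key_consistent r \<and> (\<forall>i a b. (i,a,b) \<in> I \<longrightarrow> (\<exists>b'. (i,a,b') \<in> r))"
  have "\<not> key_consistent r'" if sub: "r \<subset> r'" "r' \<subseteq> I" for r'
  proof
    assume kc: "key_consistent r'"
    obtain f0 where "f0 \<in> r'" "f0 \<notin> r" using sub by blast
    then obtain i a b where f: "(i,a,b) \<in> r'" "(i,a,b) \<notin> r" by (cases f0) auto
    then obtain b' where "(i,a,b') \<in> r" using R sub by blast
    then have "b = b'" using kc f sub unfolding key_consistent_def by blast
    then show False using f \<open>(i,a,b') \<in> r\<close> by simp
  qed
  then show "is_repair I r" using R unfolding is_repair_def by blast
qed

lemma sat_mono: "r \<subseteq> r' \<Longrightarrow> sat k r \<subseteq> sat k r'"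
  unfolding sat_def by blast

lemma edges_mono: "r \<subseteq> r' \<Longrightarrow> inst_edges r \<subseteq> inst_edges r'"
  unfolding inst_edges_def by blast

lemma path:
  assumes "as \<in> sat k r" "k > 0"
  shows "(as ! (p mod k), as ! ((p + m) mod k)) \<in> (inst_edges r)\<^sup>*"
proof (induction m)
  case 0 then show ?case by simp
next
  case (Suc m)
  define i where "i = (p + m) mod k"
  have "i < k" using assms(2) unfolding i_def by simp
  then have "(i, as ! i, as ! ((i + 1) mod k)) \<in> r" using assms(1) unfolding sat_def by blast
  moreover have "(i + 1) mod k = (p + Suc m) mod k" unfolding i_def by (simp add: mod_Suc_eq)
  ultimately have "(as ! ((p + m) mod k), as ! ((p + Suc m) mod k)) \<in> inst_edges r"
    unfolding inst_edges_def i_def by auto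
  with Suc show ?case by (meson rtrancl.rtrancl_into_rtrancl)
qed

lemma cyc:
  assumes "as \<in> sat k r" "k > 0" "i < k"
  shows "(as ! 0, as ! i) \<in> (inst_edges r)\<^sup>* \<and> (as ! i, as ! 0) \<in> (inst_edges r)\<^sup>*"
proof
  show "(as ! 0, as ! i) \<in> (inst_edges r)\<^sup>*"
    using path[OF assms(1,2), of 0 i] assms(3) by simp
  have "(i + (k - i)) mod k = 0" using assms(3) by simp
  then show "(as ! i, as ! 0) \<in> (inst_edges r)\<^sup>*"
    using path[OF assms(1,2), of i "k - i"] assms(3) by simp
qed

locale pur =
  fixes k :: nat and I :: "'c fact set"
  assumes kpos: "k > 0" and pur: "purified k I"
begin

abbreviation "E \<equiv> inst_edges I"
abbreviation "S \<equiv> inst_sccs I"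
abbreviation "P C \<equiv> comp_part I C"

lemma S_eq: "S = scc E ` Field E"
  unfolding inst_sccs_def scc_def by auto

lemma back_edge:
  assumes "(i,a,b) \<in> I" shows "(b,a) \<in> E\<^sup>*"
proof -
  obtain as j where as: "as \<in> sat k I" "j < k" "(i,a,b) = (j, as!j, as!((j+1) mod k))"
    using pur assms unfolding purified_def by blast
  have "(as!(((j+1) mod k) mod k), as!(((j+1) mod k + (k - 1)) mod k)) \<in> E\<^sup>*"
    by (rule path[OF as(1) kpos])
  moreover have "((j+1) mod k + (k-1)) mod k = j"
  proof -
    have "((j+1) mod k + (k-1)) mod k = (j + 1 + (k - 1)) mod k" by (simp add: mod_add_left_eq)
    also have "j + 1 + (k - 1) = j + k" using kpos by simp
    finally show ?thesis using as(2) by simp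
  qed
  ultimately show ?thesis using as(3) by simp
qed

lemma scc_same:
  assumes "C \<in> S" "a \<in> C" shows "C = scc E a"
proof -
  obtain v where C: "C = scc E v" using assms(1) S_eq by auto
  then have "(v,a) \<in> E\<^sup>*" "(a,v) \<in> E\<^sup>*" using assms(2) unfolding scc_def by auto
  then show ?thesis unfolding C scc_def by (auto intro: rtrancl_trans)
qed

lemma fact_comp:
  assumes "(i,a,b) \<in> I" shows "a \<in> scc E a" "b \<in> scc E a" "scc E a \<in> S"
proof -
  show "a \<in> scc E a" unfolding scc_def by simp
  have "(a,b) \<in> E" using assms unfolding inst_edges_def by auto
  then show "b \<in> scc E a" using back_edge[OF assms] unfolding scc_def by auto
  have "a \<in> Field E" using \<open>(a,b) \<in> E\<close> by (auto simp: Field_def)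
  then show "scc E a \<in> S" using S_eq by auto
qed

lemma fact_in_part:
  assumes "(i,a,b) \<in> I" "C \<in> S" "a \<in> C" shows "(i,a,b) \<in> P C"
  using fact_comp[OF assms(1)] scc_same[OF assms(2,3)] assms unfolding comp_part_def by auto

lemma part_disj:
  assumes "f \<in> P C" "f \<in> P D" "C \<in> S" "D \<in> S" shows "C = D"
proof -
  obtain i a b where f: "f = (i,a,b)" by (cases f) auto
  have "a \<in> C" "a \<in> D" using assms f unfolding comp_part_def by auto
  then show ?thesis using scc_same assms by metis
qed

lemma I_union: "I = (\<Union>C\<in>S. P C)"
proof
  show "I \<subseteq> (\<Union>C\<in>S. P C)"
  proof
    fix f assume "f \<in> I"
    obtain i a b where f: "f = (i,a,b)" by (cases f) auto
    then show "f \<in> (\<Union>C\<in>S. P C)"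
      using fact_in_part[of i a b "scc E a"] fact_comp[of i a b] \<open>f \<in> I\<close> by blast
  qed
  show "(\<Union>C\<in>S. P C) \<subseteq> I" unfolding comp_part_def by auto
qed

lemma R1:
  assumes "is_repair I r" "C \<in> S" shows "is_repair (P C) (r \<inter> P C)"
  unfolding repair_char
proof (intro conjI allI impI)
  show "r \<inter> P C \<subseteq> P C" by auto
  show "key_consistent (r \<inter> P C)" using assms(1) unfolding repair_char key_consistent_def by blast
  fix i a b assume "(i,a,b) \<in> P C"
  then have ab: "(i,a,b) \<in> I" "a \<in> C" unfolding comp_part_def by auto
  then obtain b' where b': "(i,a,b') \<in> r" using assms(1) unfolding repair_char by blast
  then have "(i,a,b') \<in> I" using assms(1) unfolding repair_char by blast
  then have "(i,a,b') \<in> P C" using fact_in_part ab assms(2) by blast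
  then show "\<exists>b'. (i,a,b') \<in> r \<inter> P C" using b' by blast
qed

lemma R2_int:
  assumes "\<forall>C\<in>S. rho C \<subseteq> P C" "C \<in> S"
  shows "(\<Union>D\<in>S. rho D) \<inter> P C = rho C"
  using assms part_disj by blast

lemma R2:
  assumes "\<forall>C\<in>S. is_repair (P C) (rho C)"
  shows "is_repair I (\<Union>D\<in>S. rho D)"
  unfolding repair_char
proof (intro conjI allI impI)
  have sub: "\<forall>C\<in>S. rho C \<subseteq> P C" using assms unfolding repair_char by blast
  then show "(\<Union>D\<in>S. rho D) \<subseteq> I" unfolding comp_part_def by blast
  show "key_consistent (\<Union>D\<in>S. rho D)" unfolding key_consistent_def
  proof (intro allI impI)
    fix i a b b' assume "(i,a,b) \<in> (\<Union>D\<in>S. rho D)" "(i,a,b') \<in> (\<Union>D\<in>S. rho D)"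
    then obtain C D where CD: "C \<in> S" "D \<in> S" "(i,a,b) \<in> rho C" "(i,a,b') \<in> rho D" by blast
    then have "a \<in> C" "a \<in> D" using sub unfolding comp_part_def by blast+
    then have "C = D" using scc_same CD by metis
    then show "b = b'" using CD assms unfolding repair_char key_consistent_def by blast
  qed
  fix i a b assume f: "(i,a,b) \<in> I"
  have "(i,a,b) \<in> P (scc E a)" using fact_in_part fact_comp f by blast
  then obtain b' where "(i,a,b') \<in> rho (scc E a)"
    using assms fact_comp(3)[OF f] unfolding repair_char by blast
  then show "\<exists>b'. (i,a,b') \<in> (\<Union>D\<in>S. rho D)" using fact_comp(3)[OF f] by blast
qed

lemma S1:
  assumes "r \<subseteq> I" "C \<in> S"
  shows "as \<in> sat k (r \<inter> P C) \<longleftrightarrow> as \<in> sat k r \<and> as ! 0 \<in> C"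
proof
  assume a: "as \<in> sat k (r \<inter> P C)"
  then have "(0, as!0, as!((0+1) mod k)) \<in> r \<inter> P C" using kpos unfolding sat_def by blast
  then have "as ! 0 \<in> C" unfolding comp_part_def by auto
  moreover have "as \<in> sat k r" using a sat_mono[of "r \<inter> P C" r] by blast
  ultimately show "as \<in> sat k r \<and> as ! 0 \<in> C" by simp
next
  assume a: "as \<in> sat k r \<and> as ! 0 \<in> C"
  have Cs: "C = scc E (as ! 0)" using scc_same assms(2) a by blast
  have inC: "as ! i \<in> C" if "i < k" for i
  proof -
    have "(as ! 0, as ! i) \<in> (inst_edges r)\<^sup>* \<and> (as ! i, as ! 0) \<in> (inst_edges r)\<^sup>*"
      using cyc a kpos that by blast
    moreover have "(inst_edges r)\<^sup>* \<subseteq> E\<^sup>*" using edges_mono[OF assms(1)] rtrancl_mono by blast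
    ultimately show ?thesis unfolding Cs scc_def by blast
  qed
  show "as \<in> sat k (r \<inter> P C)" unfolding sat_def
  proof (intro CollectI conjI allI impI)
    show "length as = k" using a unfolding sat_def by blast
    fix i assume "i < k"
    then have "(i, as ! i, as ! ((i + 1) mod k)) \<in> r" using a unfolding sat_def by blast
    moreover have "as ! i \<in> C" "as ! ((i + 1) mod k) \<in> C" using inC \<open>i<k\<close> kpos by auto
    ultimately show "(i, as ! i, as ! ((i + 1) mod k)) \<in> r \<inter> P C"
      using assms(1) unfolding comp_part_def by auto
  qed
qed

lemma comp0:
  assumes "as \<in> sat k r" "r \<subseteq> I" shows "scc E (as ! 0) \<in> S" "as ! 0 \<in> scc E (as ! 0)"
proof -
  have "(0, as!0, as!((0+1) mod k)) \<in> I" using assms kpos unfolding sat_def by blast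
  then show "scc E (as ! 0) \<in> S" "as ! 0 \<in> scc E (as ! 0)" using fact_comp by blast+
qed

end

theorem lemma4p4:
  fixes k :: nat and CT :: "nat set" and I :: "'c fact set" and r :: "'c fact set"
  assumes "k \<ge> 2"
    and "wf_instance k I"
    and "CT \<subseteq> {..<k}"
    and "consistent_on CT I"
    and "distinct_var_constants k I"
    and "purified k I"
  shows "frugal_repair k I r \<longleftrightarrow>
    (\<exists>rho. (\<forall>C \<in> inst_sccs I. frugal_repair k (comp_part I C) (rho C)) \<and>
          r = (\<Union>C \<in> inst_sccs I. rho C))"
proof -
  interpret pur k I using assms(1,6) by unfold_locales auto
  show ?thesis
  proof
    assume F: "frugal_repair k I r"
    then have R: "is_repair I r" unfolding frugal_repair_def by blast
    have rI: "r \<subseteq> I" using R unfolding is_repair_def by blast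
    define rho where "rho C = r \<inter> P C" for C
    have "frugal_repair k (P C) (rho C)" if C: "C \<in> S" for C
      unfolding frugal_repair_def
    proof (intro conjI notI)
      show "is_repair (P C) (rho C)" unfolding rho_def using R1[OF R C] .
      assume "\<exists>r'. is_repair (P C) r' \<and> sat k r' \<subset> sat k (rho C)"
      then obtain r' where r': "is_repair (P C) r'" "sat k r' \<subset> sat k (rho C)" by blast
      define rho' where "rho' D = (if D = C then r' else r \<inter> P D)" for D
      have rep': "\<forall>D\<in>S. is_repair (P D) (rho' D)" unfolding rho'_def using r' R1[OF R] by auto
      have sub': "\<forall>D\<in>S. rho' D \<subseteq> P D" using rep' unfolding repair_char by blast
      define r'' where "r'' = (\<Union>D\<in>S. rho' D)"
      have R'': "is_repair I r''" unfolding r''_def using R2[OF rep'] .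
      have r''I: "r'' \<subseteq> I" using R'' unfolding is_repair_def by blast
      have int: "r'' \<inter> P D = rho' D" if "D \<in> S" for D unfolding r''_def using R2_int[OF sub' that] .
      have "sat k r'' \<subset> sat k r"
      proof
        show "sat k r'' \<subseteq> sat k r"
        proof
          fix as assume as: "as \<in> sat k r''"
          let ?D = "scc E (as ! 0)"
          have D: "?D \<in> S" "as ! 0 \<in> ?D" using comp0[OF as r''I] by auto
          then have "as \<in> sat k (rho' ?D)" using S1[OF r''I D(1)] as int[OF D(1)] by auto
          then show "as \<in> sat k r"
            using r' sat_mono[of "r \<inter> P ?D" r] unfolding rho'_def rho_def
            by (auto split: if_splits)
        qed
        obtain as where as: "as \<in> sat k (rho C)" "as \<notin> sat k r'" using r' by blast
        then have as2: "as \<in> sat k r" "as ! 0 \<in> C" using S1[OF rI C] unfolding rho_def by auto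
        have "as \<notin> sat k r''"
        proof
          assume "as \<in> sat k r''"
          then have "as \<in> sat k (r'' \<inter> P C)" using S1[OF r''I C] as2 by auto
          then show False using int[OF C] as unfolding rho'_def by simp
        qed
        then show "sat k r'' \<noteq> sat k r" using as2 by blast
      qed
      then show False using F R'' unfolding frugal_repair_def by blast
    qed
    moreover have "r = (\<Union>C\<in>S. rho C)" unfolding rho_def using rI I_union by blast
    ultimately show "\<exists>rho. (\<forall>C \<in> S. frugal_repair k (P C) (rho C)) \<and> r = (\<Union>C \<in> S. rho C)"
      by blast
  next
    assume "\<exists>rho. (\<forall>C \<in> S. frugal_repair k (P C) (rho C)) \<and> r = (\<Union>C \<in> S. rho C)"
    then obtain rho where F: "\<forall>C \<in> S. frugal_repair k (P C) (rho C)" and r: "r = (\<Union>C \<in> S. rho C)"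
      by blast
    have rep: "\<forall>C\<in>S. is_repair (P C) (rho C)" using F unfolding frugal_repair_def by blast
    have sub: "\<forall>C\<in>S. rho C \<subseteq> P C" using rep unfolding repair_char by blast
    have R: "is_repair I r" unfolding r using R2[OF rep] .
    have rI: "r \<subseteq> I" using R unfolding is_repair_def by blast
    have int: "r \<inter> P C = rho C" if "C \<in> S" for C unfolding r using R2_int[OF sub that] .
    show "frugal_repair k I r" unfolding frugal_repair_def
    proof (intro conjI notI R)
      assume "\<exists>r'. is_repair I r' \<and> sat k r' \<subset> sat k r"
      then obtain r' where r': "is_repair I r'" "sat k r' \<subset> sat k r" by blast
      have r'I: "r' \<subseteq> I" using r' unfolding is_repair_def by blast
      obtain as where as: "as \<in> sat k r" "as \<notin> sat k r'" using r' by blast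
      let ?C = "scc E (as ! 0)"
      have C: "?C \<in> S" "as ! 0 \<in> ?C" using comp0[OF as(1) rI] by auto
      have "sat k (r' \<inter> P ?C) \<subset> sat k (rho ?C)"
      proof
        show "sat k (r' \<inter> P ?C) \<subseteq> sat k (rho ?C)"
        proof
          fix bs assume "bs \<in> sat k (r' \<inter> P ?C)"
          then have "bs \<in> sat k r'" "bs ! 0 \<in> ?C" using S1[OF r'I C(1)] by auto
          then have "bs \<in> sat k r" "bs ! 0 \<in> ?C" using r' by auto
          then show "bs \<in> sat k (rho ?C)" using S1[OF rI C(1)] int[OF C(1)] by auto
        qed
        have "as \<in> sat k (rho ?C)" using S1[OF rI C(1)] int[OF C(1)] as C by auto
        moreover have "as \<notin> sat k (r' \<inter> P ?C)" using as sat_mono[of "r' \<inter> P ?C" r'] by blast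
        ultimately show "sat k (r' \<inter> P ?C) \<noteq> sat k (rho ?C)" by blast
      qed
      then show False using F C R1[OF r'(1) C(1)] unfolding frugal_repair_def by blast
    qed
  qed
qed

end
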